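(* Let $N\ge 1$ and $L\ge 1$ be integers and let $m>0$. Let $h_1,\dots,h_N$ be i.i.d. Nakagami-$m$ random variables, i.e. with density $p_h(x)=\frac{2m^m x^{2m-1}}{\Gamma(m)}e^{-mx^2}$ for $x>0$, and set $\gamma_n=h_n^2$ (so each $\gamma_n$ has density $\frac{m^m x^{m-1}}{\Gamma(m)}e^{-mx}$, $x>0$). Define $$R(\mathbf h)^2=\frac{1}{\pi}\,\Gamma\!\left(\frac N2+1\right)^{2/N}\left(\prod_{n=1}^N\gamma_n\right)^{1/N},$$ and for $\rho>0$ define the sphere lower bound $$P_{\rm slb}(\rho)=1-\mathbb E\left[\left(1-\overline{\Gamma}\!\left(\frac N2,\frac{R(\mathbf h)^2}{2}\rho\right)\right)^{L}\right],$$ where the expectation is over $(h_1,\dots,h_N)$ and $\overline\Gamma(a,x)=\frac{1}{\Gamma(a)}\int_x^{\infty}t^{a-1}e^{-t}\,dt$ is the normalized upper incomplete Gamma function. Then the diversity order $$d=-\lim_{\rho\to\infty}\frac{\log P_{\rm slb}(\rho)}{\log\rho}$$ exists and equals $mN$, for every $L\ge 1$.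
   Context: This is the sphere lower bound on the frame error probability of an infinite $N$-dimensional lattice with unit-determinant generator matrix, used over a real block-fading channel $\mathbf y_\ell=\mathrm{diag}(h_1,\dots,h_N)\mathbf x_\ell+\mathbf z_\ell$, $\ell=1,\dots,L$, with i.i.d. $\mathcal N(0,\sigma^2)$ noise and SNR $\rho=1/\sigma^2$; the fading is constant over a frame of $L$ symbols. $\Gamma$ denotes the Gamma function. $P_{\rm slb}(\rho)$ is obtained by replacing the Voronoi region of the faded lattice by a ball of equal volume $\prod_n h_n$, whose squared radius is $R(\mathbf h)^2$. *)

theory Defs
  imports "HOL-Probability.Probability"
begin

definition nakagami_pdf :: "real \<Rightarrow> real \<Rightarrow> real" where
  "nakagami_pdf m x =
     (if x > 0 then 2 * m powr m * x powr (2*m - 1) / Gamma m * exp (- m * x\<^sup>2) else 0)"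

definition nakagami_measure :: "real \<Rightarrow> real measure" where
  "nakagami_measure m = density lborel (\<lambda>x. ennreal (nakagami_pdf m x))"

definition fading_measure :: "real \<Rightarrow> nat \<Rightarrow> (nat \<Rightarrow> real) measure" where
  "fading_measure m N = PiM {..<N} (\<lambda>_. nakagami_measure m)"

definition upper_gamma_reg :: "real \<Rightarrow> real \<Rightarrow> real" where
  "upper_gamma_reg a x = (LBINT t:{x..}. t powr (a - 1) * exp (- t)) / Gamma a"

definition R_sq :: "nat \<Rightarrow> (nat \<Rightarrow> real) \<Rightarrow> real" where
  "R_sq N h = (1 / pi) * Gamma (real N / 2 + 1) powr (2 / real N)
               * (\<Prod>n<N. (h n)\<^sup>2) powr (1 / real N)"

definition P_slb :: "real \<Rightarrow> nat \<Rightarrow> nat \<Rightarrow> real \<Rightarrow> real" where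
  "P_slb m N L \<rho> = 1 - (\<integral>h. (1 - upper_gamma_reg (real N / 2) (R_sq N h / 2 * \<rho>)) ^ L
                           \<partial>fading_measure m N)"

end

theory Submission
  imports Defs
begin
definition gi :: "real \<Rightarrow> real \<Rightarrow> real" where "gi a t = t powr (a-1) * exp (-t)"
lemma gi_nonneg: "0 \<le> gi a t" by (simp add: gi_def)
lemma gi_has_integral: "a>0 \<Longrightarrow> (gi a has_integral Gamma a) {0..}"
  using Gamma_integral_real[of a] unfolding gi_def[abs_def] by (simp add: exp_minus divide_inverse)
lemma gi_nn: "a>0 \<Longrightarrow> (\<integral>\<^sup>+t. ennreal (indicator {0..} t * gi a t) \<partial>lborel) = ennreal (Gamma a)"
  using nn_integral_has_integral_lebesgue[OF _ gi_has_integral, of a] gi_nonneg by simp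
lemma gi_meas[measurable]: "gi a \<in> borel_measurable borel" unfolding gi_def by measurable
lemma gi_integrable: "a>0 \<Longrightarrow> integrable lborel (\<lambda>t. indicator {0..} t * gi a t)"
  by (rule integrableI_nonneg) (auto simp: gi_nn gi_nonneg)
lemma gi_integral: "a>0 \<Longrightarrow> integral\<^sup>L lborel (\<lambda>t. indicator {0..} t * gi a t) = Gamma a"
  by (subst integral_eq_nn_integral) (auto simp: gi_nn gi_nonneg gi_integrable Gamma_real_pos less_imp_le)
lemma ugr_eq: "upper_gamma_reg a x = integral\<^sup>L lborel (\<lambda>t. indicator {x..} t * gi a t) / Gamma a"
  unfolding upper_gamma_reg_def set_lebesgue_integral_def gi_def by simp

lemma ind_integrable: "a>0 \<Longrightarrow> 0 \<le> x \<Longrightarrow> integrable lborel (\<lambda>t. indicator {x..} t * gi a t)"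
  by (rule Bochner_Integration.integrable_bound[OF gi_integrable]) (auto simp: indicator_def gi_nonneg)

lemma Q_nonneg: "a>0 \<Longrightarrow> 0 \<le> x \<Longrightarrow> 0 \<le> upper_gamma_reg a x"
  unfolding ugr_eq by (auto intro!: divide_nonneg_pos integral_nonneg_AE simp: gi_nonneg Gamma_real_pos)

lemma Q_anti: assumes "a>0" "0 \<le> x" "x \<le> y" shows "upper_gamma_reg a y \<le> upper_gamma_reg a x"
proof -
  have "integral\<^sup>L lborel (\<lambda>t. indicator {y..} t * gi a t) \<le> integral\<^sup>L lborel (\<lambda>t. indicator {x..} t * gi a t)"
    using assms by (intro integral_mono ind_integrable) (auto simp: indicator_def gi_nonneg)
  thus ?thesis unfolding ugr_eq using assms by (intro divide_right_mono) (auto simp: Gamma_real_pos less_imp_le)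
qed

lemma Q_le1: assumes "a>0" "0 \<le> x" shows "upper_gamma_reg a x \<le> 1"
proof -
  have "upper_gamma_reg a x \<le> upper_gamma_reg a 0" using Q_anti assms by auto
  also have "\<dots> = 1" unfolding ugr_eq using gi_integral[OF assms(1)] Gamma_real_pos[OF assms(1)] by simp
  finally show ?thesis .
qed

lemma Q_markov_pt: fixes a x b t :: real assumes "a>0" "0<x" "0<b"
  shows "indicator {x..} t * gi a t \<le> x powr (-b) * (indicator {0..} t * gi (a+b) t)"
proof (cases "t \<ge> x")
  case True
  have "x powr b \<le> t powr b" by (rule powr_mono2) (use assms True in auto)
  hence "x powr b * x powr (-b) \<le> t powr b * x powr (-b)" by (rule mult_right_mono) simp
  hence 1: "1 \<le> x powr (-b) * t powr b" using assms by (simp add: powr_add[symmetric] mult.commute)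
  have 2: "gi a t \<le> (x powr (-b) * t powr b) * gi a t" using mult_right_mono[OF 1 gi_nonneg[of a t]] by simp
  have "t powr (a+b-1) = t powr b * t powr (a-1)" using powr_add[of t b "a-1"] by (simp add: algebra_simps)
  hence 3: "(x powr (-b) * t powr b) * gi a t = x powr (-b) * gi (a+b) t"
    unfolding gi_def by (simp add: mult.assoc)
  have 4: "indicator {x..} t * gi a t = gi a t" "indicator {0..} t * gi (a+b) t = gi (a+b) t" 
    using True assms by auto
  show ?thesis unfolding 4 using 2 3 by linarith
next
  case False
  hence "indicator {x..} t * gi a t = 0" by simp
  moreover have "0 \<le> x powr (-b) * (indicator {0..} t * gi (a+b) t)" by (simp add: gi_nonneg)
  ultimately show ?thesis by linarith
qed

lemma Q_markov: assumes "a>0" "0<x" "0<b"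
  shows "upper_gamma_reg a x \<le> x powr (-b) * Gamma (a+b) / Gamma a"
proof -
  have i1: "integrable lborel (\<lambda>t. indicator {x..} t * gi a t)" using assms ind_integrable by simp
  have i2: "integrable lborel (\<lambda>t. x powr (-b) * (indicator {0..} t * gi (a+b) t))"
    using assms gi_integrable[of "a+b"] by (intro integrable_mult_right) auto
  have "integral\<^sup>L lborel (\<lambda>t. indicator {x..} t * gi a t) \<le> integral\<^sup>L lborel (\<lambda>t. x powr (-b) * (indicator {0..} t * gi (a+b) t))"
    by (rule integral_mono[OF i1 i2 Q_markov_pt[OF assms]])
  also have "\<dots> = x powr (-b) * Gamma (a+b)" using gi_integral[of "a+b"] assms by (simp only: integral_mult_right_zero)
  finally have "integral\<^sup>L lborel (\<lambda>t. indicator {x..} t * gi a t) \<le> x powr (-b) * Gamma (a+b)" .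
  thus ?thesis unfolding ugr_eq using assms by (intro divide_right_mono) (auto simp: Gamma_real_pos less_imp_le)
qed

lemma Q_pos: assumes "a>0" shows "0 < upper_gamma_reg a 1"
proof -
  define k where "k = min 1 (2 powr (a-1)) * exp (-2)"
  have kpos: "k > 0" unfolding k_def by auto
  have "integral\<^sup>L lborel (\<lambda>t. indicator {1..2::real} t * k) \<le> integral\<^sup>L lborel (\<lambda>t. indicator {1..} t * gi a t)"
  proof (intro integral_mono ind_integrable)
    show "integrable lborel (\<lambda>t. indicator {1..2::real} t * k)"
      by (intro integrable_mult_left) (simp add: integrable_indicator_iff)  
    fix t show "indicator {1..2} t * k \<le> indicator {1..} t * gi a t"
    proof (cases "t \<in> {1..2}")
      case True
      have "min 1 (2 powr (a-1)) \<le> t powr (a-1)"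
      proof (cases "a \<ge> 1")
        case True
        hence "1 powr (a-1) \<le> t powr (a-1)" using \<open>t \<in> {1..2}\<close> by (intro powr_mono2) auto
        thus ?thesis by simp
      next
        case False
        hence "2 powr (a-1) \<le> t powr (a-1)" using \<open>t \<in> {1..2}\<close> by (intro powr_mono2') auto
        thus ?thesis by simp
      qed
      moreover have "exp (-2) \<le> exp (-t)" using True by simp
      ultimately have "k \<le> gi a t" unfolding k_def gi_def by (intro mult_mono) auto
      thus ?thesis using True by simp
    qed (auto simp: indicator_def gi_nonneg)
  qed (use assms in auto)
  moreover have "integral\<^sup>L lborel (\<lambda>t. indicator {1..2::real} t * k) = k"
    by simp
  ultimately show ?thesis unfolding ugr_eq using kpos assms by (auto intro!: divide_pos_pos simp: Gamma_real_pos)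
qed
lemma pdf_eq: assumes "m>0" "x>0"
  shows "nakagami_pdf m x = 2*m*x * gi m (m*x^2) / Gamma m"
proof -
  have a: "(m*x^2) powr (m-1) = m powr (m-1) * x powr (2*m-2)"
  proof -
    have "(m*x^2) powr (m-1) = m powr (m-1) * (x^2) powr (m-1)" using assms by (simp add: powr_mult)
    moreover have "x^2 = x powr 2" using assms powr_realpow[of x 2] by simp
    moreover have "(x powr 2) powr (m-1) = x powr (2*m-2)" by (simp add: powr_powr algebra_simps)
    ultimately show ?thesis by simp
  qed
  have b: "m * m powr (m-1) = m powr m" using assms powr_add[of m 1 "m-1"] by simp
  have c: "x * x powr (2*m-2) = x powr (2*m-1)" using assms powr_add[of x 1 "2*m-2"] by simp
  have "2*m*x * gi m (m*x^2) = 2 * (m * m powr (m-1)) * (x * x powr (2*m-2)) * exp (- m * x\<^sup>2)"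
    unfolding gi_def a by (simp add: algebra_simps)
  also have "\<dots> = 2 * m powr m * x powr (2*m-1) * exp (- m * x\<^sup>2)" unfolding b c ..
  finally show ?thesis using assms unfolding nakagami_pdf_def by simp
qed
lemma NK:
  fixes m :: real and g :: "real \<Rightarrow> real"
  assumes m: "m>0" and g: "\<And>t. 0 \<le> g t" and int: "(\<lambda>t. gi m t * g t) absolutely_integrable_on {0<..}"
  shows "(\<integral>\<^sup>+x. ennreal (nakagami_pdf m x * g (m*x^2)) \<partial>lborel)
         = ennreal (integral {0<..} (\<lambda>t. gi m t * g t / Gamma m))"
proof -
  define f where "f t = gi m t * g t / Gamma m" for t
  define S :: "real set" where "S = {0<..}"
  have gi_nn: "0 \<le> gi m t" for t by (simp add: gi_def)
  have fnn: "0 \<le> f t" for t unfolding f_def using gi_nn g m by (simp add: Gamma_real_pos less_imp_le)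
  have "(\<lambda>t. gi m t * g t) integrable_on S" using int unfolding S_def
    using set_lebesgue_integral_eq_integral(1) by blast
  hence "f integrable_on S" unfolding f_def[abs_def] by (rule integrable_on_divide)
  hence fi: "f absolutely_integrable_on S" using fnn by (intro nonnegative_absolutely_integrable_1) auto
  have img: "(\<lambda>x. m*x^2) ` S = S"
  proof
    show "(\<lambda>x. m*x^2) ` S \<subseteq> S" using m unfolding S_def by auto
    show "S \<subseteq> (\<lambda>x. m*x^2) ` S"
    proof
      fix t assume "t \<in> S"
      hence t: "t > 0" unfolding S_def by simp
      have "m * (sqrt (t/m))^2 = t" using t m by simp
      moreover have "sqrt (t/m) \<in> S" using t m unfolding S_def by simp
      ultimately show "t \<in> (\<lambda>x. m*x^2) ` S" by (metis image_eqI)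
    qed
  qed
  have inj: "inj_on (\<lambda>x. m*x^2) S"
    unfolding S_def inj_on_def using m by (auto simp: power2_eq_iff_nonneg less_imp_le)
  have der: "((\<lambda>x. m*x^2) has_field_derivative 2*m*x) (at x within S)" for x
    by (auto intro!: derivative_eq_intros)
  have "(\<lambda>x. \<bar>2*m*x\<bar> * f (m*x^2)) absolutely_integrable_on S \<and>
           integral S (\<lambda>x. \<bar>2*m*x\<bar> * f (m*x^2)) = integral S f"
    using has_absolute_integral_change_of_variables_1'[of S "\<lambda>x. m*x^2" "\<lambda>x. 2*m*x" f "integral S f", OF _ der inj]
    using img fi by (simp add: S_def)
  hence hi: "((\<lambda>x. \<bar>2*m*x\<bar> * f (m*x^2)) has_integral integral S f) S"
    using set_lebesgue_integral_eq_integral(1) by (metis integrable_integral)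
  have "(\<integral>\<^sup>+x. ennreal (indicator S x * (\<bar>2*m*x\<bar> * f (m*x^2))) \<partial>lborel) = ennreal (integral S f)"
    by (rule nn_integral_has_integral_lebesgue[OF _ hi]) (simp add: fnn)
  moreover have "nakagami_pdf m x * g (m*x^2) = indicator S x * (\<bar>2*m*x\<bar> * f (m*x^2))" for x
  proof (cases "x > 0")
    case True
    thus ?thesis using pdf_eq[OF m True] m unfolding S_def f_def by simp
  next
    case False
    thus ?thesis unfolding S_def nakagami_pdf_def by simp
  qed
  ultimately show ?thesis unfolding S_def f_def by simp
qed

lemma GI': assumes "a>0" shows "(gi a has_integral Gamma a) {0<..}"
proof -
  have "((\<lambda>t. if t \<in> {0<..} then gi a t else 0) has_integral Gamma a) {0..}"
    by (rule has_integral_spike [of "{0}", rotated 2, OF gi_has_integral[OF assms]]) auto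
  also have "?this = ?thesis"
    by (subst has_integral_restrict) auto
  finally show ?thesis .
qed

lemma GI'_abs: assumes "a>0" shows "gi a absolutely_integrable_on {0<..}"
  using GI'[OF assms] by (intro nonnegative_absolutely_integrable_1) (auto simp: gi_nonneg)

lemma pdf_meas[measurable]: "nakagami_pdf m \<in> borel_measurable borel"
  unfolding nakagami_pdf_def[abs_def] by measurable

lemma pdf_nonneg: assumes "m>0" shows "0 \<le> nakagami_pdf m x"
  using assms unfolding nakagami_pdf_def by (auto intro!: divide_nonneg_pos simp: Gamma_real_pos)

lemma sets_nak[simp, measurable_cong]: "sets (nakagami_measure m) = sets borel"
  unfolding nakagami_measure_def by simp

lemma space_nak[simp]: "space (nakagami_measure m) = UNIV"
  unfolding nakagami_measure_def by simp

lemma nak_nn: "m > 0 \<Longrightarrow> f \<in> borel_measurable borel \<Longrightarrow>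
  (\<integral>\<^sup>+x. f x \<partial>nakagami_measure m) = (\<integral>\<^sup>+x. ennreal (nakagami_pdf m x) * f x \<partial>lborel)"
  unfolding nakagami_measure_def by (subst nn_integral_density) (auto simp: pdf_nonneg)

lemma nak_prob: assumes m: "m>0" shows "prob_space (nakagami_measure m)"
proof
  have "emeasure (nakagami_measure m) (space (nakagami_measure m)) = (\<integral>\<^sup>+x. ennreal (nakagami_pdf m x) * 1 \<partial>lborel)"
    unfolding nakagami_measure_def by (subst emeasure_density) auto
  also have "\<dots> = (\<integral>\<^sup>+x. ennreal (nakagami_pdf m x * (\<lambda>_. 1) (m*x^2)) \<partial>lborel)" by simp
  also have "\<dots> = ennreal (integral {0<..} (\<lambda>t. gi m t * (\<lambda>_. 1) t / Gamma m))"
    by (rule NK) (use m GI'_abs[OF m] in auto)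
  also have "integral {0<..} (\<lambda>t. gi m t * (\<lambda>_. 1) t / Gamma m) = Gamma m / Gamma m"
    using integral_unique[OF has_integral_divide[OF GI'[OF m], of "Gamma m"]] by simp
  also have "Gamma m / Gamma m = 1" using Gamma_real_pos[OF m] by simp
  finally show "emeasure (nakagami_measure m) (space (nakagami_measure m)) = 1" by simp
qed

lemma nak_moment: assumes m: "m>0" and s: "0<s" "s<m"
  shows "(\<integral>\<^sup>+x. ennreal ((x^2) powr (-s)) \<partial>nakagami_measure m) < \<infinity>"
proof -
  define g where "g t = (t/m) powr (-s)" for t
  have "(\<integral>\<^sup>+x. ennreal ((x^2) powr (-s)) \<partial>nakagami_measure m)
      = (\<integral>\<^sup>+x. ennreal (nakagami_pdf m x * g (m*x^2)) \<partial>lborel)"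
    using m by (subst nak_nn) (auto simp: g_def ennreal_mult'' pdf_nonneg)
  also have "\<dots> = ennreal (integral {0<..} (\<lambda>t. gi m t * g t / Gamma m))"
  proof (rule NK)
    have "(\<lambda>t. m powr s * gi (m-s) t) integrable_on {0<..}"
      using integrable_on_cmult_left[OF has_integral_integrable[OF GI'[of "m-s"]], of "m powr s"] s by simp
    hence "(\<lambda>t. gi m t * g t) integrable_on {0<..}"
    proof (rule iffD1[OF integrable_cong, rotated])
      fix t :: real assume "t \<in> {0<..}"
      hence t: "t > 0" by simp
      have "gi m t * g t = t powr (m-1) * (t powr (-s) * m powr s) * exp (-t)"
        unfolding gi_def g_def using t m by (simp add: powr_divide powr_minus divide_simps)
      also have "t powr (m-1) * t powr (-s) = t powr (m-s-1)"
        by (simp add: powr_add[symmetric] algebra_simps)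
      hence "t powr (m-1) * (t powr (-s) * m powr s) * exp (-t) = m powr s * gi (m-s) t"
        unfolding gi_def by (metis (no_types, lifting) mult.assoc mult.commute)
      finally show "m powr s * gi (m-s) t = gi m t * g t" by simp
    qed
    thus "(\<lambda>t. gi m t * g t) absolutely_integrable_on {0<..}"
      by (intro nonnegative_absolutely_integrable_1) (auto simp: gi_nonneg g_def)
  qed (use m in \<open>auto simp: g_def\<close>)
  finally show ?thesis by simp
qed

lemma nak_small: assumes m: "m>0" and u: "0<u" "u \<le> 1"
  shows "m powr m * exp (-m) / (m * Gamma m) * u powr m \<le> measure (nakagami_measure m) {x. x^2 \<le> u}"
proof -
  define C where "C = 2 * m powr m * exp (-m) / Gamma m"
  have C: "C \<ge> 0" unfolding C_def using m by (simp add: Gamma_real_pos less_imp_le)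
  have A[measurable]: "{x::real. x^2 \<le> u} \<in> sets borel" by measurable
  have "emeasure (nakagami_measure m) {x. x^2 \<le> u} = (\<integral>\<^sup>+x. ennreal (nakagami_pdf m x) * indicator {x. x^2 \<le> u} x \<partial>lborel)"
    unfolding nakagami_measure_def by (subst emeasure_density) auto
  also have "\<dots> \<ge> (\<integral>\<^sup>+x. ennreal C * ennreal (indicator {0..sqrt u} x * x powr (2*m-1)) \<partial>lborel)"
  proof (rule nn_integral_mono)
    fix x :: real
    show "ennreal C * ennreal (indicator {0..sqrt u} x * x powr (2*m-1)) \<le> ennreal (nakagami_pdf m x) * indicator {x. x^2 \<le> u} x"
    proof (cases "0 < x \<and> x \<le> sqrt u")
      case True
      have "x^2 \<le> (sqrt u)^2" by (rule power_mono) (use True in auto)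
      hence x2: "x^2 \<le> u" using u by simp
      have "m * x^2 \<le> m * 1" by (rule mult_left_mono) (use x2 u m in auto)
      hence "m * x^2 \<le> m" by simp
      hence "exp (-m) \<le> exp (- m * x^2)" by simp
      moreover have "0 \<le> 2 * m powr m * x powr (2*m-1) / Gamma m" using m by (simp add: Gamma_real_pos less_imp_le)
      ultimately have "(2 * m powr m * x powr (2*m-1) / Gamma m) * exp (-m) \<le> (2 * m powr m * x powr (2*m-1) / Gamma m) * exp (- m * x^2)"
        by (rule mult_left_mono)
      moreover have "C * x powr (2*m-1) = (2 * m powr m * x powr (2*m-1) / Gamma m) * exp (-m)" unfolding C_def by simp
      moreover have "nakagami_pdf m x = (2 * m powr m * x powr (2*m-1) / Gamma m) * exp (- m * x^2)"
        using True unfolding nakagami_pdf_def by simp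
      ultimately have "C * x powr (2*m-1) \<le> nakagami_pdf m x" by simp
      thus ?thesis using True x2 C by (simp add: ennreal_mult'' [symmetric] ennreal_leI)
    next
      case False
      hence "indicator {0..sqrt u} x * x powr (2*m-1) = 0" by (auto simp: indicator_def)
      thus ?thesis by (metis ennreal_0 mult_zero_right zero_le)
    qed
  qed
  also have "(\<integral>\<^sup>+x. ennreal C * ennreal (indicator {0..sqrt u} x * x powr (2*m-1)) \<partial>lborel)
     = ennreal C * (\<integral>\<^sup>+x. ennreal (indicator {0..sqrt u} x * x powr (2*m-1)) \<partial>lborel)"
    by (rule nn_integral_cmult) measurable
  also have "(\<integral>\<^sup>+x. ennreal (indicator {0..sqrt u} x * x powr (2*m-1)) \<partial>lborel) = ennreal (sqrt u powr (2*m-1+1) / (2*m-1+1))"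
    by (rule nn_integral_has_integral_lebesgue[OF _ has_integral_powr_from_0]) (use m u in auto)
  also have "sqrt u powr (2*m-1+1) = u powr m" using u by (simp add: powr_half_sqrt[symmetric] powr_powr)
  also have "ennreal C * ennreal (u powr m / (2*m-1+1)) = ennreal (C * (u powr m / (2*m)))"
    by (subst ennreal_mult[symmetric]) (use C m u in auto)
  finally have "ennreal (C * (u powr m / (2*m))) \<le> emeasure (nakagami_measure m) {x. x^2 \<le> u}" .
  also have "\<dots> = ennreal (measure (nakagami_measure m) {x. x^2 \<le> u})"
    using prob_space.finite_measure[OF nak_prob[OF m]] finite_measure.emeasure_eq_measure by blast
  finally have "C * (u powr m / (2*m)) \<le> measure (nakagami_measure m) {x. x^2 \<le> u}"
    using measure_nonneg[of "nakagami_measure m" "{x. x^2 \<le> u}"] by (simp add: ennreal_le_iff2) linarith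
  moreover have "C * (u powr m / (2*m)) = m powr m * exp (-m) / (m * Gamma m) * u powr m"
    unfolding C_def using m by (simp add: field_simps)
  ultimately show ?thesis by simp
qed

lemma PP: assumes "m>0" shows "product_prob_space (\<lambda>_. nakagami_measure m)"
  unfolding product_prob_space_def product_prob_space_axioms_def product_sigma_finite_def
  using nak_prob[OF assms] prob_space_imp_sigma_finite by auto

lemma fading_prob: assumes "m>0" shows "prob_space (fading_measure m N)"
  unfolding fading_measure_def by (rule prob_space_PiM) (rule nak_prob[OF assms])

lemma comp_meas: assumes "n \<in> {..<N}" shows "(\<lambda>h. h n) \<in> borel_measurable (fading_measure m N)"
proof -
  have "(\<lambda>h. h n) \<in> measurable (PiM {..<N} (\<lambda>_. nakagami_measure m)) (nakagami_measure m)"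
    by (rule measurable_component_singleton) (rule assms)
  moreover have "measurable (PiM {..<N} (\<lambda>_. nakagami_measure m)) (nakagami_measure m) = measurable (PiM {..<N} (\<lambda>_. nakagami_measure m)) borel"
    by (rule measurable_cong_sets) (rule refl, rule sets_nak)
  ultimately show ?thesis unfolding fading_measure_def by (simp only:)
qed

lemma space_fading: "space (fading_measure m N) = space (PiM {..<N} (\<lambda>_. nakagami_measure m))"
  unfolding fading_measure_def ..

lemma Pi_meas[measurable]: "(\<lambda>h. \<Prod>n<N. (h n)^2) \<in> borel_measurable (fading_measure m N)"
  by (rule borel_measurable_prod, rule borel_measurable_power, rule comp_meas)

lemma fading_prod_integral:
  fixes f :: "real \<Rightarrow> real"
  assumes m: "m>0" and f: "integrable (nakagami_measure m) f"
  shows "integrable (fading_measure m N) (\<lambda>h. \<Prod>n<N. f (h n))"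
    "(\<integral>h. (\<Prod>n<N. f (h n)) \<partial>fading_measure m N) = (integral\<^sup>L (nakagami_measure m) f) ^ N"
proof -
  interpret P: product_prob_space "\<lambda>_. nakagami_measure m" "{..<N}" by (rule PP[OF m])
  show "integrable (fading_measure m N) (\<lambda>h. \<Prod>n<N. f (h n))"
    unfolding fading_measure_def using P.product_integrable_prod[of "{..<N}" "\<lambda>_. f"] f by simp
  show "(\<integral>h. (\<Prod>n<N. f (h n)) \<partial>fading_measure m N) = (integral\<^sup>L (nakagami_measure m) f) ^ N"
    unfolding fading_measure_def using P.product_integral_prod[of "{..<N}" "\<lambda>_. f"] f by simp
qed

lemma AE_nonzero: assumes m: "m>0" shows "AE h in fading_measure m N. \<forall>n\<in>{..<N}. h n \<noteq> 0"
proof -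
  have 0: "AE x in lborel. 0 < ennreal (nakagami_pdf m x) \<longrightarrow> x \<noteq> 0"
    using AE_lborel_singleton[of "0::real"] by (rule eventually_mono) simp
  have 1: "AE x in nakagami_measure m. x \<noteq> 0"
  proof -
    have mm: "(\<lambda>x. ennreal (nakagami_pdf m x)) \<in> borel_measurable lborel" by measurable
    show ?thesis unfolding nakagami_measure_def by (subst AE_density[OF mm]) (rule 0)
  qed
  show ?thesis
  proof (rule AE_ball_countable')
    fix n assume n: "n \<in> {..<N}"
    show "AE h in fading_measure m N. h n \<noteq> 0"
      unfolding fading_measure_def
      using AE_PiM_component[of "{..<N}" "\<lambda>_. nakagami_measure m" n "\<lambda>x. x \<noteq> 0"] nak_prob[OF m] n 1
      by blast
  qed simp
qed

lemma Qmax_meas: assumes "a>0" shows "(\<lambda>y. upper_gamma_reg a (max 0 y)) \<in> borel_measurable borel"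
proof -
  have "mono (\<lambda>y. - upper_gamma_reg a (max 0 y))"
    unfolding mono_def using Q_anti[OF assms] by (simp add: max_def)
  hence "(\<lambda>y. - upper_gamma_reg a (max 0 y)) \<in> borel_measurable borel" by (rule borel_measurable_mono)
  thus ?thesis by simp
qed

definition cN :: "nat \<Rightarrow> real" where "cN N = (1/pi) * Gamma (real N/2+1) powr (2/real N) / 2"

lemma cN_pos: "cN N > 0"
proof -
  have "Gamma (real N/2+1) > 0" by (rule Gamma_real_pos) simp
  hence "Gamma (real N/2+1) powr (2/real N) > 0" by (metis less_irrefl powr_gt_zero)
  thus ?thesis unfolding cN_def by (simp add: pi_gt_zero)
qed

lemma R_sq_eq: "R_sq N h / 2 * \<rho> = cN N * \<rho> * (\<Prod>n<N. (h n)^2) powr (1/real N)"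
  by (simp add: R_sq_def cN_def)

lemma X_nonneg: "\<rho> \<ge> 0 \<Longrightarrow> R_sq N h / 2 * \<rho> \<ge> 0"
  unfolding R_sq_eq using cN_pos[of N] by simp

lemma Qx_meas: assumes "a>0" "\<rho> \<ge> 0"
  shows "(\<lambda>h. upper_gamma_reg a (R_sq N h / 2 * \<rho>)) \<in> borel_measurable (fading_measure m N)"
proof -
  have "(\<lambda>h. R_sq N h / 2 * \<rho>) \<in> borel_measurable (fading_measure m N)"
    unfolding R_sq_eq by measurable
  from measurable_compose[OF this Qmax_meas[OF assms(1)]]
  have "(\<lambda>h. upper_gamma_reg a (max 0 (R_sq N h / 2 * \<rho>))) \<in> borel_measurable (fading_measure m N)" .
  moreover have "(\<lambda>h. upper_gamma_reg a (max 0 (R_sq N h / 2 * \<rho>))) = (\<lambda>h. upper_gamma_reg a (R_sq N h / 2 * \<rho>))"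
    by (rule ext) (metis X_nonneg[OF assms(2)] max.absorb2)
  ultimately show ?thesis by metis
qed

lemma P_slb_alt: assumes m: "m>0" and N: "N \<ge> 1" and \<rho>: "\<rho> \<ge> 0"
  shows "P_slb m N L \<rho> = (\<integral>h. 1 - (1 - upper_gamma_reg (real N/2) (R_sq N h / 2 * \<rho>)) ^ L \<partial>fading_measure m N)"
    "\<And>h. 0 \<le> upper_gamma_reg (real N/2) (R_sq N h / 2 * \<rho>)"
    "\<And>h. upper_gamma_reg (real N/2) (R_sq N h / 2 * \<rho>) \<le> 1"
    "integrable (fading_measure m N) (\<lambda>h. upper_gamma_reg (real N/2) (R_sq N h / 2 * \<rho>))"
    "integrable (fading_measure m N) (\<lambda>h. 1 - (1 - upper_gamma_reg (real N/2) (R_sq N h / 2 * \<rho>)) ^ L)"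
proof -
  interpret F: prob_space "fading_measure m N" by (rule fading_prob[OF m])
  have a: "real N / 2 > 0" using N by simp
  note meas = Qx_meas[OF a \<rho>, of N m]
  show b0: "0 \<le> upper_gamma_reg (real N/2) (R_sq N h / 2 * \<rho>)" for h
    by (rule Q_nonneg[OF a X_nonneg[OF \<rho>]])
  show b1: "upper_gamma_reg (real N/2) (R_sq N h / 2 * \<rho>) \<le> 1" for h
    by (rule Q_le1[OF a X_nonneg[OF \<rho>]])
  show "integrable (fading_measure m N) (\<lambda>h. upper_gamma_reg (real N/2) (R_sq N h / 2 * \<rho>))"
    by (rule F.integrable_const_bound[where B=1]) (use b0 b1 meas in auto)
  have i2: "integrable (fading_measure m N) (\<lambda>h. (1 - upper_gamma_reg (real N/2) (R_sq N h / 2 * \<rho>)) ^ L)"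
  proof (rule F.integrable_const_bound[where B=1])
    show "AE h in fading_measure m N. norm ((1 - upper_gamma_reg (real N/2) (R_sq N h / 2 * \<rho>)) ^ L) \<le> 1"
      using b0 b1 by (auto intro!: power_le_one simp: abs_le_iff)
  qed (use meas in measurable)
  show "integrable (fading_measure m N) (\<lambda>h. 1 - (1 - upper_gamma_reg (real N/2) (R_sq N h / 2 * \<rho>)) ^ L)"
    by (rule Bochner_Integration.integrable_diff[OF _ i2]) simp
  show "P_slb m N L \<rho> = (\<integral>h. 1 - (1 - upper_gamma_reg (real N/2) (R_sq N h / 2 * \<rho>)) ^ L \<partial>fading_measure m N)"
    unfolding P_slb_def by (subst Bochner_Integration.integral_diff[OF _ i2]) (auto simp: F.prob_space)
qed

lemma LB: assumes m: "m>0" and N: "N \<ge> 1" and L: "L \<ge> 1" and \<rho>: "\<rho> \<ge> 1 / cN N"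
  shows "upper_gamma_reg (real N/2) 1 * (m powr m * exp (-m) / (m * Gamma m) * (1 / (cN N * \<rho>)) powr m) ^ N \<le> P_slb m N L \<rho>"
proof -
  interpret F: prob_space "fading_measure m N" by (rule fading_prob[OF m])
  define a where "a = real N / 2"
  have a: "a > 0" using N unfolding a_def by simp
  have c: "cN N > 0" by (rule cN_pos)
  have \<rho>pos: "\<rho> > 0" using \<rho> c by (metis order.strict_trans2 zero_less_divide_1_iff)
  define u where "u = 1 / (cN N * \<rho>)"
  have u: "0 < u" "u \<le> 1" unfolding u_def using \<rho> \<rho>pos c by (auto simp: field_simps)
  define Q where "Q h = upper_gamma_reg a (R_sq N h / 2 * \<rho>)" for h
  define Q1 where "Q1 = upper_gamma_reg a 1"
  have Q1: "Q1 \<ge> 0" unfolding Q1_def using Q_pos[OF a] by simp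
  note alt = P_slb_alt[OF m N less_imp_le[OF \<rho>pos], folded a_def, folded Q_def]
  define D where "D = m powr m * exp (-m) / (m * Gamma m)"
  have D: "D \<ge> 0" unfolding D_def using m by (simp add: Gamma_real_pos less_imp_le)
  define I :: "(nat \<Rightarrow> real) \<Rightarrow> real" where "I h = (\<Prod>n<N. indicator {x::real. x^2 \<le> u} (h n))" for h
  interpret NK: prob_space "nakagami_measure m" by (rule nak_prob[OF m])
  have setu: "{x::real. x^2 \<le> u} \<in> sets (nakagami_measure m)" by (subst sets_nak) measurable
  have indint: "integrable (nakagami_measure m) (indicator {x::real. x^2 \<le> u} :: real \<Rightarrow> real)"
    by (rule NK.integrable_const_bound[where B=1]) (auto intro: borel_measurable_indicator[OF setu])
  have intI: "integrable (fading_measure m N) (\<lambda>h. \<Prod>n<N. indicator {x::real. x^2 \<le> u} (h n) :: real)"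
    by (rule fading_prod_integral(1)[OF m indint])
  have "Q1 * (D * u powr m) ^ N \<le> Q1 * (measure (nakagami_measure m) {x. x^2 \<le> u}) ^ N"
  proof -
    have Du: "0 \<le> D * u powr m" using D by simp
    have Dm: "D * u powr m \<le> measure (nakagami_measure m) {x. x^2 \<le> u}" using nak_small[OF m u] unfolding D_def by simp
    show ?thesis by (rule mult_left_mono[OF power_mono[OF Dm Du] Q1])
  qed
  also have "\<dots> = (\<integral>h. Q1 * I h \<partial>fading_measure m N)"
    unfolding I_def using fading_prod_integral(2)[OF m indint, of N] by simp
  also have "\<dots> \<le> (\<integral>h. Q h \<partial>fading_measure m N)"
  proof (rule integral_mono)
    show "integrable (fading_measure m N) (\<lambda>h. Q1 * I h)" unfolding I_def using intI by simp
    show "integrable (fading_measure m N) Q" using alt(4) unfolding Q_def by simp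
    fix h :: "nat \<Rightarrow> real"
    show "Q1 * I h \<le> Q h"
    proof (cases "\<forall>n<N. (h n)^2 \<le> u")
      case True
      hence "I h = 1" unfolding I_def by (auto intro!: prod.neutral)
      have "(\<Prod>n<N. (h n)^2) \<le> (\<Prod>n<N. u)" by (rule prod_mono) (use True in auto)
      hence "(\<Prod>n<N. (h n)^2) powr (1/real N) \<le> (u ^ N) powr (1/real N)"
        by (intro powr_mono2) (auto intro!: prod_nonneg)
      also have "(u ^ N) powr (1/real N) = u"
        using u N by (simp add: powr_realpow[symmetric] powr_powr)
      finally have "R_sq N h / 2 * \<rho> \<le> cN N * \<rho> * u" unfolding R_sq_eq using c \<rho>pos
        by (intro mult_left_mono) auto
      also have "cN N * \<rho> * u = 1" unfolding u_def using c \<rho>pos by simp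
      finally have "Q1 \<le> Q h" unfolding Q1_def Q_def by (intro Q_anti[OF a] X_nonneg) (use \<rho>pos in auto)
      thus ?thesis using \<open>I h = 1\<close> by simp
    next
      case False
      then obtain n where n: "n < N" "\<not> (h n)^2 \<le> u" by auto
      hence "I h = 0" unfolding I_def by (intro prod_zero bexI[of _ n]) auto
      thus ?thesis using alt(2)[of h] unfolding Q_def by simp
    qed
  qed
  also have "\<dots> \<le> (\<integral>h. 1 - (1 - Q h) ^ L \<partial>fading_measure m N)"
  proof (rule integral_mono)
    show "integrable (fading_measure m N) Q" using alt(4) unfolding Q_def by simp
    show "integrable (fading_measure m N) (\<lambda>h. 1 - (1 - Q h) ^ L)"
      by (rule alt(5))
    fix h
    have "(1 - Q h) ^ L \<le> (1 - Q h) ^ 1"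
      by (rule power_decreasing) (use L alt(2)[of h] alt(3)[of h] in \<open>auto simp: Q_def\<close>)
    thus "Q h \<le> 1 - (1 - Q h) ^ L" by simp
  qed
  also have "\<dots> = P_slb m N L \<rho>" using alt(1) unfolding Q_def by simp
  finally show ?thesis unfolding Q1_def D_def u_def a_def .
qed

lemma UB: assumes m: "m>0" and N: "N \<ge> 1" and \<rho>: "\<rho> > 0" and s: "0 < s" "s < m"
  shows "P_slb m N L \<rho> \<le> real L * (Gamma (real N/2 + real N * s) / Gamma (real N/2) * (cN N * \<rho>) powr (- (real N * s)))
            * (\<integral>x. (x^2) powr (-s) \<partial>nakagami_measure m) ^ N"
proof -
  interpret F: prob_space "fading_measure m N" by (rule fading_prob[OF m])
  define a where "a = real N / 2"
  have a: "a > 0" using N unfolding a_def by simp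
  have c: "cN N > 0" by (rule cN_pos)
  define Q where "Q h = upper_gamma_reg a (R_sq N h / 2 * \<rho>)" for h
  note alt = P_slb_alt[OF m N less_imp_le[OF \<rho>], folded a_def, folded Q_def]
  define K where "K = Gamma (a + real N * s) / Gamma a * (cN N * \<rho>) powr (- (real N * s))"
  define g where "g x = (x^2) powr (-s)" for x :: real
  have gint: "integrable (nakagami_measure m) g"
    unfolding g_def by (rule integrableI_nonneg) (use nak_moment[OF m s] in auto)
  note pint = fading_prod_integral[OF m gint, of N]
  have "P_slb m N L \<rho> = (\<integral>h. 1 - (1 - Q h) ^ L \<partial>fading_measure m N)" using alt(1) unfolding Q_def by simp
  also have "\<dots> \<le> (\<integral>h. real L * Q h \<partial>fading_measure m N)"
  proof (rule integral_mono)
    show "integrable (fading_measure m N) (\<lambda>h. 1 - (1 - Q h) ^ L)" using alt(5) unfolding Q_def by simp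
    show "integrable (fading_measure m N) (\<lambda>h. real L * Q h)" using alt(4) unfolding Q_def by simp
    fix h
    have "1 + real L * (- Q h) \<le> (1 + - Q h) ^ L"
      by (rule Bernoulli_inequality) (use alt(3)[of h] in \<open>simp add: Q_def\<close>)
    thus "1 - (1 - Q h) ^ L \<le> real L * Q h" by simp
  qed
  also have "\<dots> = real L * (\<integral>h. Q h \<partial>fading_measure m N)" by simp
  also have "(\<integral>h. Q h \<partial>fading_measure m N) \<le> (\<integral>h. K * (\<Prod>n<N. g (h n)) \<partial>fading_measure m N)"
  proof (rule integral_mono_AE)
    show "integrable (fading_measure m N) Q" using alt(4) unfolding Q_def by simp
    show "integrable (fading_measure m N) (\<lambda>h. K * (\<Prod>n<N. g (h n)))" using pint(1) by simp
    show "AE h in fading_measure m N. Q h \<le> K * (\<Prod>n<N. g (h n))"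
      using AE_nonzero[OF m, of N]
    proof (rule eventually_mono)
      fix h :: "nat \<Rightarrow> real" assume h: "\<forall>n\<in>{..<N}. h n \<noteq> 0"
      define P where "P = (\<Prod>n<N. (h n)^2)"
      have P: "P > 0" unfolding P_def using h by (auto intro!: prod_pos)
      define X where "X = cN N * \<rho> * P powr (1/real N)"
      have X: "X > 0" unfolding X_def using P c \<rho> by simp
      have QX: "Q h = upper_gamma_reg a X" unfolding Q_def X_def P_def R_sq_eq ..
      have b: "real N * s > 0" using N s by simp
      have "Q h \<le> X powr (- (real N * s)) * Gamma (a + real N * s) / Gamma a"
        unfolding QX by (rule Q_markov[OF a X b])
      also have "X powr (- (real N * s)) = (cN N * \<rho>) powr (- (real N * s)) * P powr (-s)"
      proof -
        have "X powr (- (real N * s)) = (cN N * \<rho>) powr (- (real N * s)) * (P powr (1/real N)) powr (- (real N * s))"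
          unfolding X_def using c \<rho> P by (simp add: powr_mult)
        also have "(P powr (1/real N)) powr (- (real N * s)) = P powr (-s)"
          using N by (simp add: powr_powr)
        finally show ?thesis .
      qed
      also have "P powr (-s) = (\<Prod>n<N. g (h n))" unfolding P_def g_def by (rule prod_powr_distrib)
      finally show "Q h \<le> K * (\<Prod>n<N. g (h n))" unfolding K_def by (simp add: field_simps)
    qed
  qed
  hence "real L * (\<integral>h. Q h \<partial>fading_measure m N) \<le> real L * (\<integral>h. K * (\<Prod>n<N. g (h n)) \<partial>fading_measure m N)"
    by (rule mult_left_mono) simp
  also have "(\<integral>h. K * (\<Prod>n<N. g (h n)) \<partial>fading_measure m N) = K * (integral\<^sup>L (nakagami_measure m) g) ^ N"
    using pint(2) by simp
  finally show ?thesis unfolding K_def a_def g_def by (simp add: mult.assoc)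
qed

lemma ev_small: assumes "e>0" shows "eventually (\<lambda>\<rho>::real. \<bar>A / ln \<rho>\<bar> < e) at_top"
proof -
  have "((\<lambda>\<rho>::real. A / ln \<rho>) \<longlongrightarrow> 0) at_top"
    by (rule tendsto_divide_0[OF tendsto_const]) (rule filterlim_at_top_imp_at_infinity[OF ln_at_top])
  from tendstoD[OF this assms] show ?thesis by simp
qed

lemma ln_lower: assumes "Q1>0" "D>0" "c>0" "\<rho>>0"
  shows "ln (Q1 * (D * (1/(c*\<rho>)) powr m) ^ N) = ln Q1 + real N * ln D - m * real N * ln c - m * real N * ln \<rho>"
proof -
  have p: "(1/(c*\<rho>)) powr m > 0" using assms by simp
  have "ln (Q1 * (D * (1/(c*\<rho>)) powr m) ^ N) = ln Q1 + real N * (ln D + m * ln (1/(c*\<rho>)))"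
    using assms p by (simp add: ln_mult ln_realpow ln_powr)
  also have "ln (1/(c*\<rho>)) = - ln c - ln \<rho>" using assms by (simp add: ln_div ln_mult)
  finally show ?thesis by (simp add: algebra_simps)
qed

theorem theorem1:
  fixes m :: real and N L :: nat
  assumes "N \<ge> 1" and "L \<ge> 1" and "m > 0"
  shows "((\<lambda>\<rho>. - (ln (P_slb m N L \<rho>) / ln \<rho>)) \<longlongrightarrow> m * real N) at_top"
proof (rule tendstoI)
  fix e :: real assume e: "e > 0"
  note N = assms(1) and L = assms(2) and m = assms(3)
  define c where "c = cN N"
  have c: "c > 0" unfolding c_def by (rule cN_pos)
  have a: "real N / 2 > 0" using N by simp
  define Q1 where "Q1 = upper_gamma_reg (real N/2) 1"
  have Q1: "Q1 > 0" unfolding Q1_def by (rule Q_pos[OF a])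
  define D where "D = m powr m * exp (-m) / (m * Gamma m)"
  have D: "D > 0" unfolding D_def using m by (simp add: Gamma_real_pos)
  define A0 where "A0 = ln Q1 + real N * ln D - m * real N * ln c"
  define s where "s = max (m/2) (m - e / (2 * real N))"
  have s: "0 < s" "s < m" unfolding s_def using m e N by auto
  have sN: "real N * s \<ge> m * real N - e/2"
  proof -
    have "s \<ge> m - e / (2 * real N)" unfolding s_def by simp
    hence "real N * s \<ge> real N * (m - e / (2 * real N))" by (rule mult_left_mono) simp
    thus ?thesis using N by (simp add: algebra_simps)
  qed
  define Ms where "Ms = (\<integral>x. (x^2) powr (-s) \<partial>nakagami_measure m)"
  define Ks where "Ks = real L * (Gamma (real N/2 + real N * s) / Gamma (real N/2)) * Ms ^ N"
  define B where "B = real N * s * ln c - ln Ks"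
  have "eventually (\<lambda>\<rho>. \<rho> \<ge> max (1/c) 2 \<and> \<bar>A0 / ln \<rho>\<bar> < e \<and> \<bar>B / ln \<rho>\<bar> < e/2) at_top"
    using e by (intro eventually_conj eventually_ge_at_top ev_small) auto
  thus "eventually (\<lambda>\<rho>. dist (- (ln (P_slb m N L \<rho>) / ln \<rho>)) (m * real N) < e) at_top"
  proof (rule eventually_mono)
    fix \<rho> :: real assume H: "\<rho> \<ge> max (1/c) 2 \<and> \<bar>A0 / ln \<rho>\<bar> < e \<and> \<bar>B / ln \<rho>\<bar> < e/2"
    have \<rho>: "\<rho> \<ge> 1/c" "\<rho> \<ge> 2" using H by auto
    have \<rho>0: "\<rho> > 0" using \<rho> by simp
    have lnr: "ln \<rho> > 0" using \<rho> by simp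
    define P where "P = P_slb m N L \<rho>"
    have low: "Q1 * (D * (1/(c*\<rho>)) powr m) ^ N \<le> P"
      unfolding P_def Q1_def D_def c_def by (rule LB[OF m N L]) (use \<rho> in \<open>simp add: c_def\<close>)
    have lowpos: "Q1 * (D * (1/(c*\<rho>)) powr m) ^ N > 0" using Q1 D c \<rho>0 by simp
    have P: "P > 0" using low lowpos by simp
    have lnlow: "ln P \<ge> A0 - m * real N * ln \<rho>"
    proof -
      have "ln (Q1 * (D * (1/(c*\<rho>)) powr m) ^ N) \<le> ln P" using low lowpos P by simp
      thus ?thesis unfolding A0_def using ln_lower[OF Q1 D c \<rho>0, of m N] by simp
    qed
    have up: "P \<le> Ks * (c * \<rho>) powr (- (real N * s))"
      using UB[OF m N \<rho>0 s, of L] unfolding P_def Ks_def Ms_def c_def by (simp add: mult_ac)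
    have pw: "(c * \<rho>) powr (- (real N * s)) > 0" using c \<rho>0 by simp
    have Ks: "Ks > 0"
    proof (rule ccontr)
      assume "\<not> Ks > 0"
      hence "Ks * (c * \<rho>) powr (- (real N * s)) \<le> 0" using pw by (simp add: mult_nonpos_nonneg)
      thus False using up P by simp
    qed
    have lnup: "ln P \<le> ln Ks - real N * s * (ln c + ln \<rho>)"
    proof -
      have "ln P \<le> ln (Ks * (c * \<rho>) powr (- (real N * s)))" using up P by simp
      also have "\<dots> = ln Ks - real N * s * (ln c + ln \<rho>)"
        using Ks pw c \<rho>0 by (simp add: ln_mult ln_powr)
      finally show ?thesis .
    qed
    have u1: "- (ln P / ln \<rho>) \<le> m * real N - A0 / ln \<rho>"
    proof -
      have "- ln P \<le> m * real N * ln \<rho> - A0" using lnlow by simp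
      hence "(- ln P) / ln \<rho> \<le> (m * real N * ln \<rho> - A0) / ln \<rho>" by (rule divide_right_mono) (use lnr in simp)
      thus ?thesis using lnr by (simp add: diff_divide_distrib)
    qed
    have l1: "- (ln P / ln \<rho>) \<ge> real N * s + B / ln \<rho>"
    proof -
      have "- ln P \<ge> real N * s * ln \<rho> + B" using lnup unfolding B_def by (simp add: algebra_simps)
      hence "(- ln P) / ln \<rho> \<ge> (real N * s * ln \<rho> + B) / ln \<rho>" by (rule divide_right_mono) (use lnr in simp)
      thus ?thesis using lnr by (simp add: add_divide_distrib)
    qed
    have "- (ln P / ln \<rho>) < m * real N + e" using u1 H by linarith
    moreover have "- (ln P / ln \<rho>) > m * real N - e" using l1 H sN by linarith
    ultimately show "dist (- (ln (P_slb m N L \<rho>) / ln \<rho>)) (m * real N) < e"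
      unfolding P_def dist_real_def by linarith
  qed
qed
end
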